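(* For any $t_\infty,\delta,\varepsilon>0$ there exists $\eta>0$ such that for all sufficiently large $T$, \[\mathbb{P}\Big(s_T(t+\eta)\subseteq\bigcup_{y\in s_T(t)}B(y,\delta)\ \ \forall t\le t_\infty\Big)\ge1-\varepsilon.\]
   Context: $(\xi(z))_{z\in\mathbb{Z}^d}$ are i.i.d. with $\mathbb{P}(\xi(z)>x)=x^{-\alpha}$ for $x\ge1$, $\alpha>d$. $|\cdot|$ is the $\ell_1$-norm, $B(z,R)$ the open $\ell_1$-ball. $q=d/(\alpha-d)$, $a(T)=(T/\log T)^q$, $r(T)=(T/\log T)^{q+1}$, $L_T=\{z\in\mathbb{R}^d:r(T)z\in\mathbb{Z}^d\}$, $\xi_T(z)=\xi(r(T)z)/a(T)$, $[z]_T=(\lfloor r(T)z_i\rfloor/r(T))_{i=1}^d$. For $z\in L_T$, \[h_T(z)=\inf\Big\{\sum_{j=1}^n q\frac{|y_{j-1}-y_j|}{\xi_T(y_j)}: n\ge0,\ y_0,\dots,y_n\in L_T,\ y_0=z,\ y_n=0\Big\},\] and $s_T(t)=\{z\in\mathbb{R}^d: h_T([z]_T)\le t\}$. *)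

theory Defs
  imports "HOL-Probability.Probability"
begin

text \<open>Points of Z^d are int^'d, points of R^d are real^'d, with d = CARD('d).
  Realisations of the random field are functions X :: int^'d => real.\<close>

definition l1norm :: "real^'d \<Rightarrow> real" where
  "l1norm x = (\<Sum>i\<in>UNIV. \<bar>x $ i\<bar>)"

definition l1ball :: "real^'d \<Rightarrow> real \<Rightarrow> (real^'d) set" where
  "l1ball y R = {x. l1norm (x - y) < R}"

definition qexp :: "nat \<Rightarrow> real \<Rightarrow> real" where
  "qexp d \<alpha> = real d / (\<alpha> - real d)"

definition aT :: "nat \<Rightarrow> real \<Rightarrow> real \<Rightarrow> real" where
  "aT d \<alpha> T = (T / ln T) powr (qexp d \<alpha>)"

definition rT :: "nat \<Rightarrow> real \<Rightarrow> real \<Rightarrow> real" where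
  "rT d \<alpha> T = (T / ln T) powr (qexp d \<alpha> + 1)"

definition LT :: "nat \<Rightarrow> real \<Rightarrow> real \<Rightarrow> (real^'d) set" where
  "LT d \<alpha> T = {z. \<forall>i. rT d \<alpha> T * z $ i \<in> \<int>}"

text \<open>xi_T(z) = xi(r(T) z)/a(T); for z in L_T the floor is exact, r(T) z being a lattice point.\<close>
definition xiT :: "nat \<Rightarrow> real \<Rightarrow> real \<Rightarrow> (int^'d \<Rightarrow> real) \<Rightarrow> real^'d \<Rightarrow> real" where
  "xiT d \<alpha> T X z = X (\<chi> i. \<lfloor>rT d \<alpha> T * z $ i\<rfloor>) / aT d \<alpha> T"

text \<open>h_T(z): infimum over lattice paths y_0 = z, ..., y_n = 0 (n >= 0) in L_T,
  represented as the nonempty list [y_0,...,y_n].\<close>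
definition hT :: "nat \<Rightarrow> real \<Rightarrow> real \<Rightarrow> (int^'d \<Rightarrow> real) \<Rightarrow> real^'d \<Rightarrow> real" where
  "hT d \<alpha> T X z = Inf {(\<Sum>j\<in>{1..<length ys}.
        qexp d \<alpha> * l1norm (ys ! (j - 1) - ys ! j) / xiT d \<alpha> T X (ys ! j)) | ys.
        ys \<noteq> [] \<and> hd ys = z \<and> last ys = 0 \<and> set ys \<subseteq> LT d \<alpha> T}"

definition floorT :: "nat \<Rightarrow> real \<Rightarrow> real \<Rightarrow> real^'d \<Rightarrow> real^'d" where
  "floorT d \<alpha> T z = (\<chi> i. of_int \<lfloor>rT d \<alpha> T * z $ i\<rfloor> / rT d \<alpha> T)"

definition sT :: "nat \<Rightarrow> real \<Rightarrow> real \<Rightarrow> (int^'d \<Rightarrow> real) \<Rightarrow> real \<Rightarrow> (real^'d) set" where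
  "sT d \<alpha> T X t = {z. hT d \<alpha> T X (floorT d \<alpha> T z) \<le> t}"

end

theory Submission
  imports Defs "HOL-Real_Asymp.Real_Asymp"
begin


fun cst :: "real \<Rightarrow> (real^'d \<Rightarrow> real) \<Rightarrow> (real^'d) list \<Rightarrow> real" where
  "cst q f (x#y#rest) = q * l1norm (x - y) / f y + cst q f (y#rest)"
| "cst q f _ = 0"

lemma cst_sum: "(\<Sum>j\<in>{1..<length ys}. q * l1norm (ys ! (j - 1) - ys ! j) / f (ys ! j)) = cst q f ys"
proof (induction q f ys rule: cst.induct)
  case (1 q f x y rest)
  have "{1..<length (x#y#rest)} = insert 1 {2..<length (x#y#rest)}" by auto
  then have "(\<Sum>j\<in>{1..<length (x#y#rest)}. q * l1norm ((x#y#rest) ! (j - 1) - (x#y#rest) ! j) / f ((x#y#rest) ! j))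
     = q * l1norm (x - y) / f y + (\<Sum>j\<in>{2..<length (x#y#rest)}. q * l1norm ((x#y#rest) ! (j - 1) - (x#y#rest) ! j) / f ((x#y#rest) ! j))"
    by simp
  also have "(\<Sum>j\<in>{2..<length (x#y#rest)}. q * l1norm ((x#y#rest) ! (j - 1) - (x#y#rest) ! j) / f ((x#y#rest) ! j))
     = (\<Sum>j\<in>{1..<length (y#rest)}. q * l1norm ((y#rest) ! (j - 1) - (y#rest) ! j) / f ((y#rest) ! j))"
    unfolding numeral_2_eq_2 length_Cons One_nat_def sum.shift_bounds_Suc_ivl by simp
  finally show ?case using 1 by simp
qed auto

lemma l1norm_nonneg: "l1norm x \<ge> 0"
  unfolding l1norm_def by (simp add: sum_nonneg)

lemma l1norm_triangle: "l1norm (x + y) \<le> l1norm x + l1norm y"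
  unfolding l1norm_def by (simp add: sum.distrib[symmetric] sum_mono abs_triangle_ineq)

lemma l1norm_minus: "l1norm (x - y) = l1norm (y - x)"
  unfolding l1norm_def by (simp add: abs_minus_commute)

lemma l1norm_tri: "l1norm (x - z) \<le> l1norm (x - y) + l1norm (y - z)"
  using l1norm_triangle[of "x - y" "y - z"] by simp

lemma l1norm_zero[simp]: "l1norm 0 = 0"
  unfolding l1norm_def by simp

lemma cst_nonneg: "q \<ge> 0 \<Longrightarrow> (\<forall>y\<in>set ys. f y > 0) \<Longrightarrow> cst q f ys \<ge> 0"
  by (induction q f ys rule: cst.induct) (auto intro!: add_nonneg_nonneg divide_nonneg_pos mult_nonneg_nonneg l1norm_nonneg)

definition hh :: "real \<Rightarrow> (real^'d \<Rightarrow> real) \<Rightarrow> (real^'d) set \<Rightarrow> real^'d \<Rightarrow> real" where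
  "hh q f L z = Inf {cst q f ys | ys. ys \<noteq> [] \<and> hd ys = z \<and> last ys = 0 \<and> set ys \<subseteq> L}"

lemma hh_le:
  assumes "q \<ge> 0" "\<forall>y\<in>L. f y > 0" "ys \<noteq> []" "hd ys = z" "last ys = 0" "set ys \<subseteq> L"
  shows "hh q f L z \<le> cst q f ys"
  unfolding hh_def
proof (rule cInf_lower)
  show "cst q f ys \<in> {cst q f ys | ys. ys \<noteq> [] \<and> hd ys = z \<and> last ys = 0 \<and> set ys \<subseteq> L}"
    using assms by blast
  show "bdd_below {cst q f ys | ys. ys \<noteq> [] \<and> hd ys = z \<and> last ys = 0 \<and> set ys \<subseteq> L}"
    using assms(1,2) by (auto intro!: bdd_belowI[of _ 0] cst_nonneg)
qed

lemma hh_approx: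
  assumes "q \<ge> 0" "\<forall>y\<in>L. f y > 0" "z \<in> L" "0 \<in> L" "e > 0"
  shows "\<exists>ys. ys \<noteq> [] \<and> hd ys = z \<and> last ys = 0 \<and> set ys \<subseteq> L \<and> cst q f ys < hh q f L z + e"
proof -
  let ?S = "{cst q f ys | ys. ys \<noteq> [] \<and> hd ys = z \<and> last ys = 0 \<and> set ys \<subseteq> L}"
  have "cst q f [z,0] \<in> ?S" using assms(3,4) by force
  then have ne: "?S \<noteq> {}" by blast
  have "\<exists>x\<in>?S. x < Inf ?S + e"
    using cInf_lessD[OF ne, of "Inf ?S + e"] assms(5) by auto
  then show ?thesis unfolding hh_def by blast
qed

lemma cst_lowerA:
  assumes "q > 0" "K > 0"
  shows "ys \<noteq> [] \<Longrightarrow> last ys = 0 \<Longrightarrow> (\<forall>y\<in>set (tl ys). 0 < f y \<and> f y \<le> K)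
     \<Longrightarrow> cst q f ys \<ge> (q / K) * l1norm (hd ys)"
proof (induction ys rule: induct_list012)
  case (3 x y rest)
  then have IH: "cst q f (y#rest) \<ge> (q/K) * l1norm y" and fy: "0 < f y" "f y \<le> K" by auto
  have "q * l1norm (x - y) / K \<le> q * l1norm (x - y) / f y"
    using fy assms by (intro divide_left_mono mult_nonneg_nonneg l1norm_nonneg) auto
  have "l1norm x \<le> l1norm (x - y) + l1norm y" using l1norm_triangle[of "x-y" y] by simp
  then have "(q/K) * l1norm x \<le> (q/K) * (l1norm (x - y) + l1norm y)"
    using assms by (intro mult_left_mono) auto
  also have "\<dots> \<le> q * l1norm (x - y) / f y + cst q f (y#rest)"
    using IH \<open>q * l1norm (x - y) / K \<le> q * l1norm (x - y) / f y\<close> by (simp add: add_divide_distrib distrib_left)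
  finally show ?case by simp
qed auto

lemma cst_lowerB:
  assumes "q > 0" "K > 0" "R > 0"
  shows "ys \<noteq> [] \<Longrightarrow> last ys = 0 \<Longrightarrow> (\<forall>y\<in>set ys. 0 < f y) \<Longrightarrow> (\<forall>y\<in>set ys. l1norm y < R \<longrightarrow> f y \<le> K)
     \<Longrightarrow> (\<forall>y\<in>set ys. l1norm y < R) \<or> cst q f ys \<ge> q * R / K"
proof (induction ys rule: induct_list012)
  case (3 x y rest)
  then have IH: "(\<forall>y\<in>set (y#rest). l1norm y < R) \<or> cst q f (y#rest) \<ge> q * R / K" by auto
  have c0: "q * l1norm (x - y) / f y \<ge> 0" using 3 assms by (auto intro!: divide_nonneg_pos mult_nonneg_nonneg l1norm_nonneg)
  show ?case
  proof (cases "\<forall>y\<in>set (y#rest). l1norm y < R")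
    case True
    show ?thesis
    proof (cases "l1norm x < R")
      case True then show ?thesis using \<open>\<forall>y\<in>set (y#rest). l1norm y < R\<close> by auto
    next
      case False
      have "cst q f (x#y#rest) \<ge> (q / K) * l1norm (hd (x#y#rest))"
        using 3(3-6) True assms by (intro cst_lowerA) auto
      moreover have "(q/K) * l1norm x \<ge> (q/K) * R" using False assms by (intro mult_left_mono) auto
      ultimately show ?thesis by simp
    qed
  next
    case False
    then show ?thesis using IH c0 by auto
  qed
qed (auto simp: assms)

lemma lattice_walk:
  fixes u0 u1 :: "int^'d"
  shows "int m \<le> (\<Sum>i\<in>UNIV. \<bar>u0$i - u1$i\<bar>) \<Longrightarrow>
     \<exists>v::int^'d. (\<forall>i. min (u0$i) (u1$i) \<le> v$i \<and> v$i \<le> max (u0$i) (u1$i)) \<and> (\<Sum>i\<in>UNIV. \<bar>u0$i - v$i\<bar>) = int m"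
proof (induction m)
  case 0
  show ?case by (rule exI[of _ u0]) auto
next
  case (Suc m)
  then obtain v where vb: "\<forall>i. min (u0$i) (u1$i) \<le> v$i \<and> v$i \<le> max (u0$i) (u1$i)"
    and vs: "(\<Sum>i\<in>UNIV. \<bar>u0$i - v$i\<bar>) = int m" by auto
  have "\<exists>i. v$i \<noteq> u1$i"
  proof (rule ccontr)
    assume "\<not> ?thesis"
    then have "(\<Sum>i\<in>UNIV. \<bar>u0$i - v$i\<bar>) = (\<Sum>i\<in>UNIV. \<bar>u0$i - u1$i\<bar>)" by auto
    then show False using vs Suc.prems by simp
  qed
  then obtain i where i: "v$i \<noteq> u1$i" by blast
  define v' where "v' = (\<chi> j. if j = i then v$j + sgn (u1$i - v$i) else v$j)"
  have b': "\<forall>j. min (u0$j) (u1$j) \<le> v'$j \<and> v'$j \<le> max (u0$j) (u1$j)"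
  proof
    fix j show "min (u0$j) (u1$j) \<le> v'$j \<and> v'$j \<le> max (u0$j) (u1$j)"
      using vb[rule_format, of j] i unfolding v'_def by (cases "j = i") (auto simp: sgn_if)
  qed
  have e: "\<bar>u0$j - v'$j\<bar> = \<bar>u0$j - v$j\<bar> + (if j = i then 1 else 0)" for j
    using vb[rule_format, of j] i unfolding v'_def by (cases "j = i") (auto simp: sgn_if)
  have "(\<Sum>j\<in>UNIV. \<bar>u0$j - v'$j\<bar>) = (\<Sum>j\<in>UNIV. \<bar>u0$j - v$j\<bar>) + (\<Sum>j\<in>UNIV. (if j = i then 1 else 0))"
    unfolding e sum.distrib by simp
  also have "\<dots> = int (Suc m)" using vs by simp
  finally show ?case using b' by blast
qed

definition Lr :: "real \<Rightarrow> (real^'d) set" where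
  "Lr r = {z. \<forall>i. r * z $ i \<in> \<int>}"

lemma Lr_repr:
  assumes "r > 0" "z \<in> Lr r"
  shows "z $ i = of_int \<lfloor>r * z $ i\<rfloor> / r"
proof -
  from assms(2) have "r * z $ i \<in> \<int>" unfolding Lr_def by auto
  then obtain k where "r * z $ i = of_int k" by (auto elim: Ints_cases)
  then show ?thesis using assms(1) by (simp add: field_simps)
qed

lemma l1norm_lattice:
  assumes "r > 0" "\<forall>i. z $ i = of_int (u $ i) / r" "\<forall>i. z' $ i = of_int (u' $ i) / r"
  shows "l1norm (z - z') = of_int (\<Sum>i\<in>UNIV. \<bar>u$i - u'$i\<bar>) / r"
proof -
  have "l1norm (z - z') = (\<Sum>i\<in>UNIV. of_int \<bar>u$i - u'$i\<bar> / r)"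
    unfolding l1norm_def using assms
    by (intro sum.cong refl) (simp add: diff_divide_distrib[symmetric])
  also have "\<dots> = of_int (\<Sum>i\<in>UNIV. \<bar>u$i - u'$i\<bar>) / r"
    by (simp add: sum_divide_distrib)
  finally show ?thesis .
qed

lemma lattice_real:
  fixes y0 y1 :: "real^'d"
  assumes r: "r > 0" and y0: "y0 \<in> Lr r" and y1: "y1 \<in> Lr r" and s: "0 \<le> s" "s \<le> l1norm (y0 - y1)"
  shows "\<exists>w\<in>Lr r. s \<le> l1norm (y0 - w) \<and> l1norm (y0 - w) \<le> s + 1 / r \<and>
            l1norm (w - y1) = l1norm (y0 - y1) - l1norm (y0 - w)"
proof -
  define u0 :: "int^'d" where "u0 = (\<chi> i. \<lfloor>r * y0 $ i\<rfloor>)"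
  define u1 :: "int^'d" where "u1 = (\<chi> i. \<lfloor>r * y1 $ i\<rfloor>)"
  have z0: "\<forall>i. y0 $ i = of_int (u0 $ i) / r" using Lr_repr[OF r y0] unfolding u0_def by simp
  have z1: "\<forall>i. y1 $ i = of_int (u1 $ i) / r" using Lr_repr[OF r y1] unfolding u1_def by simp
  define tot where "tot = (\<Sum>i\<in>UNIV. \<bar>u0$i - u1$i\<bar>)"
  have ltot: "l1norm (y0 - y1) = of_int tot / r" unfolding tot_def by (rule l1norm_lattice[OF r z0 z1])
  define m where "m = nat \<lceil>r * s\<rceil>"
  have "r * s \<le> of_int tot" using s(2) ltot r by (simp add: field_simps)
  then have "\<lceil>r * s\<rceil> \<le> tot" by (simp add: ceiling_le_iff)
  moreover have "\<lceil>r * s\<rceil> \<ge> 0" using r s by (simp add: zero_le_ceiling) (smt (verit) mult_nonneg_nonneg)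
  ultimately have "int m \<le> tot" unfolding m_def by simp
  then obtain v where vb: "\<forall>i. min (u0$i) (u1$i) \<le> v$i \<and> v$i \<le> max (u0$i) (u1$i)"
    and vs: "(\<Sum>i\<in>UNIV. \<bar>u0$i - v$i\<bar>) = int m" using lattice_walk[of m u0 u1] unfolding tot_def by blast
  define w :: "real^'d" where "w = (\<chi> i. of_int (v $ i) / r)"
  have zw: "\<forall>i. w $ i = of_int (v $ i) / r" unfolding w_def by simp
  have wL: "w \<in> Lr r" unfolding Lr_def w_def using r by simp
  have d0: "l1norm (y0 - w) = of_int (int m) / r" using l1norm_lattice[OF r z0 zw] vs by simp
  have "(\<Sum>i\<in>UNIV. \<bar>v$i - u1$i\<bar>) = (\<Sum>i\<in>UNIV. \<bar>u0$i - u1$i\<bar> - \<bar>u0$i - v$i\<bar>)"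
  proof (intro sum.cong refl)
    fix i show "\<bar>v$i - u1$i\<bar> = \<bar>u0$i - u1$i\<bar> - \<bar>u0$i - v$i\<bar>"
      using vb[rule_format, of i] by (simp add: min_def max_def split: if_splits)
  qed
  then have "(\<Sum>i\<in>UNIV. \<bar>v$i - u1$i\<bar>) = tot - int m" using vs unfolding tot_def sum_subtractf by simp
  then have d1: "l1norm (w - y1) = of_int (tot - int m) / r" using l1norm_lattice[OF r zw z1] by simp
  have rs0: "r * s \<ge> 0" using r s by simp
  have m1: "real m \<ge> r * s" "real m \<le> r * s + 1" unfolding m_def using rs0
    by (auto simp: of_nat_nat)
  show ?thesis
  proof (intro bexI[OF _ wL] conjI)
    have rl: "r * l1norm (y0 - w) = real m" using d0 r by simp
    have "r * s \<le> r * l1norm (y0 - w)" using rl m1 by simp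
    then show "s \<le> l1norm (y0 - w)" using r by simp
    have "r * l1norm (y0 - w) \<le> r * (s + 1 / r)" using rl m1 r by (simp add: distrib_left)
    then show "l1norm (y0 - w) \<le> s + 1 / r" using r by simp
    show "l1norm (w - y1) = l1norm (y0 - y1) - l1norm (y0 - w)" using d0 d1 ltot r by (simp add: diff_divide_distrib)
  qed
qed

lemma walk:
  assumes q: "q > 0" and K: "K > 0" and r: "r > 0" and fpos: "\<forall>y\<in>Lr r. f y > 0"
  shows "ys \<noteq> [] \<Longrightarrow> last ys = 0 \<Longrightarrow> set ys \<subseteq> Lr r \<Longrightarrow> (\<forall>y\<in>set ys. f y \<le> K) \<Longrightarrow>
    0 \<le> \<theta> \<Longrightarrow> \<theta> \<le> cst q f ys \<Longrightarrow>
    \<exists>w\<in>Lr r. l1norm (hd ys - w) \<le> K * \<theta> / q + 1 / r \<and> hh q f (Lr r) w \<le> cst q f ys - \<theta>"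
proof (induction ys arbitrary: \<theta> rule: induct_list012)
  case 1 then show ?case by simp
next
  case (2 x)
  then have x0: "x = 0" and th: "\<theta> = 0" by auto
  have "hh q f (Lr r) 0 \<le> cst q f [0]"
    using 2 x0 q fpos by (intro hh_le) auto
  then show ?case using x0 th 2 r by (intro bexI[of _ 0]) auto
next
  case (3 x y rest)
  define c1 where "c1 = q * l1norm (x - y) / f y"
  have yL: "y \<in> Lr r" and xL: "x \<in> Lr r" using 3 by auto
  have fy: "0 < f y" "f y \<le> K" using 3 fpos yL by auto
  have c10: "c1 \<ge> 0" unfolding c1_def using fy q by (auto intro!: divide_nonneg_pos mult_nonneg_nonneg l1norm_nonneg)
  have cst_eq: "cst q f (x#y#rest) = c1 + cst q f (y#rest)" unfolding c1_def by simp
  have lxy: "l1norm (x - y) = c1 * f y / q" unfolding c1_def using fy q by simp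
  show ?case
  proof (cases "\<theta> \<le> c1")
    case True
    define s where "s = \<theta> * f y / q"
    have s0: "0 \<le> s" unfolding s_def using 3 fy q by simp
    have "s \<le> c1 * f y / q" unfolding s_def using True fy q by (intro divide_right_mono mult_right_mono) auto
    then have s1: "s \<le> l1norm (x - y)" using lxy by simp
    obtain w where wL: "w \<in> Lr r" and w1: "s \<le> l1norm (x - w)" and w2: "l1norm (x - w) \<le> s + 1 / r"
      and w3: "l1norm (w - y) = l1norm (x - y) - l1norm (x - w)"
      using lattice_real[OF r xL yL s0 s1] by blast
    have "hh q f (Lr r) w \<le> cst q f (w#y#rest)"
      using 3 wL q fpos by (intro hh_le) auto
    also have "\<dots> = q * l1norm (w - y) / f y + cst q f (y#rest)" by simp
    also have "q * l1norm (w - y) / f y \<le> q * (l1norm (x - y) - s) / f y"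
      using w3 w1 fy q by (intro divide_right_mono mult_left_mono) auto
    also have "q * (l1norm (x - y) - s) / f y = c1 - \<theta>"
      unfolding c1_def s_def using fy q by (simp add: field_simps)
    finally have hw: "hh q f (Lr r) w \<le> cst q f (x#y#rest) - \<theta>" using cst_eq by simp
    have "s \<le> \<theta> * K / q" unfolding s_def using fy q 3 by (intro divide_right_mono mult_left_mono) auto
    then have "l1norm (x - w) \<le> K * \<theta> / q + 1 / r" using w2 by (simp add: mult.commute)
    then show ?thesis using hw wL by auto
  next
    case False
    have "\<theta> - c1 \<le> cst q f (y#rest)" using 3 cst_eq by simp
    then obtain w where wL: "w \<in> Lr r" and w1: "l1norm (y - w) \<le> K * (\<theta> - c1) / q + 1 / r"
      and w2: "hh q f (Lr r) w \<le> cst q f (y#rest) - (\<theta> - c1)"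
      using 3(2)[of "\<theta> - c1"] 3(3-6) False by auto
    have "c1 * f y / q \<le> c1 * K / q" using fy q c10 by (intro divide_right_mono mult_left_mono) auto
    then have "l1norm (x - w) \<le> c1 * K / q + (K * (\<theta> - c1) / q + 1 / r)"
      using l1norm_tri[of x w y] w1 lxy by linarith
    also have "\<dots> = K * \<theta> / q + 1 / r" using q by (simp add: field_simps)
    finally show ?thesis using w2 wL cst_eq by auto
  qed
qed

lemma zero_Lr: "0 \<in> Lr r" unfolding Lr_def by simp

lemma det_main:
  assumes q: "q > 0" and K: "K > 0" and r: "r > 0" and R: "R > 0" and fpos: "\<forall>y\<in>Lr r. f y > 0"
    and fK: "\<forall>y\<in>Lr r. l1norm y < R \<longrightarrow> f y \<le> K" and big: "t + 2*\<eta> < q*R/K"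
    and t0: "0 \<le> t" and eta: "\<eta> > 0" and z0: "z0 \<in> Lr r" and hz: "hh q f (Lr r) z0 \<le> t + \<eta>"
  shows "\<exists>w\<in>Lr r. l1norm (z0 - w) \<le> 2*K*\<eta>/q + 1/r \<and> hh q f (Lr r) w \<le> t"
proof (cases "hh q f (Lr r) z0 \<le> t")
  case True
  then show ?thesis using z0 r K q eta by (intro bexI[of _ z0]) auto
next
  case False
  obtain ys where ys: "ys \<noteq> []" "hd ys = z0" "last ys = 0" "set ys \<subseteq> Lr r"
    and cy: "cst q f ys < hh q f (Lr r) z0 + \<eta>"
    using hh_approx[OF _ fpos z0 zero_Lr eta, of q] q by auto
  have hle: "hh q f (Lr r) z0 \<le> cst q f ys" using hh_le[OF _ fpos ys] q by simp
  have "(\<forall>y\<in>set ys. l1norm y < R) \<or> cst q f ys \<ge> q * R / K"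
    using ys fpos fK by (intro cst_lowerB[OF q K R]) auto
  then have inb: "\<forall>y\<in>set ys. l1norm y < R" using cy hz big by auto
  then have fk: "\<forall>y\<in>set ys. f y \<le> K" using fK ys(4) by auto
  define \<theta> where "\<theta> = cst q f ys - t"
  have th0: "0 \<le> \<theta>" "\<theta> \<le> cst q f ys" using False hle t0 unfolding \<theta>_def by auto
  obtain w where wL: "w \<in> Lr r" and w1: "l1norm (z0 - w) \<le> K * \<theta> / q + 1 / r"
    and w2: "hh q f (Lr r) w \<le> cst q f ys - \<theta>"
    using walk[OF q K r fpos ys(1,3,4) fk th0] ys(2) by auto
  have "\<theta> \<le> 2 * \<eta>" using cy hz unfolding \<theta>_def by simp
  then have "K * \<theta> / q \<le> 2*K*\<eta>/q" using K q by (intro divide_right_mono) auto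
  then show ?thesis using w1 w2 wL unfolding \<theta>_def by (intro bexI[of _ w]) auto
qed



lemma prob_part:
  fixes M :: "'a measure" and \<xi> :: "int^'d \<Rightarrow> 'a \<Rightarrow> real"
  assumes P: "prob_space M"
    and meas: "\<forall>z. \<xi> z \<in> borel_measurable M"
    and tail: "\<forall>z x. x \<ge> 1 \<longrightarrow> measure M {\<omega> \<in> space M. \<xi> z \<omega> > x} = x powr (- \<alpha>)"
    and c: "c \<ge> 1" and S: "finite S"
  shows "{\<omega>\<in>space M. (\<forall>y. \<xi> y \<omega> > 1) \<and> (\<forall>y\<in>S. \<xi> y \<omega> \<le> c)} \<in> sets M"
    "measure M {\<omega>\<in>space M. (\<forall>y. \<xi> y \<omega> > 1) \<and> (\<forall>y\<in>S. \<xi> y \<omega> \<le> c)} \<ge> 1 - real (card S) * c powr (- \<alpha>)"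
proof -
  interpret prob_space M by (rule P)
  have m[measurable]: "\<And>y. \<xi> y \<in> borel_measurable M" using meas by auto
  have sg: "{\<omega>\<in>space M. \<xi> y \<omega> > x} \<in> sets M" for y x by measurable
  have sl: "{\<omega>\<in>space M. \<xi> y \<omega> \<le> x} \<in> sets M" for y x by measurable
  define A where "A = {\<omega>\<in>space M. \<forall>y. \<xi> y \<omega> > 1}"
  define B where "B = {\<omega>\<in>space M. \<forall>y\<in>S. \<xi> y \<omega> \<le> c}"
  have Aeq: "A = (\<Inter>y. {\<omega>\<in>space M. \<xi> y \<omega> > 1}) \<inter> space M" unfolding A_def by auto
  have As: "A \<in> sets M" unfolding Aeq by (intro sets.Int sets.countable_INT' sg) auto
  have Beq: "B = (\<Inter>y\<in>S. {\<omega>\<in>space M. \<xi> y \<omega> \<le> c}) \<inter> space M" unfolding B_def by auto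
  have Bs: "B \<in> sets M"
  proof (cases "S = {}")
    case True then show ?thesis unfolding B_def by simp
  next
    case False then show ?thesis unfolding Beq using S by (intro sets.Int sets.countable_INT' sl) (auto intro: countable_finite)
  qed
  have G: "{\<omega>\<in>space M. (\<forall>y. \<xi> y \<omega> > 1) \<and> (\<forall>y\<in>S. \<xi> y \<omega> \<le> c)} = A \<inter> B"
    unfolding A_def B_def by auto
  show "{\<omega>\<in>space M. (\<forall>y. \<xi> y \<omega> > 1) \<and> (\<forall>y\<in>S. \<xi> y \<omega> \<le> c)} \<in> sets M"
    unfolding G using As Bs by auto
  have "AE \<omega> in M. \<xi> y \<omega> > 1" for y
  proof -
    have "prob {\<omega>\<in>space M. \<xi> y \<omega> > 1} = 1" using tail by simp
    from AE_prob_1[OF this] show ?thesis by auto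
  qed
  then have "AE \<omega> in M. \<forall>y. \<xi> y \<omega> > 1" by (simp add: AE_all_countable)
  then have "AE \<omega> in M. \<omega> \<in> A" unfolding A_def by auto
  then have "AE \<omega> in M. \<omega> \<in> A \<inter> B \<longleftrightarrow> \<omega> \<in> B" by auto
  then have pAB: "prob (A \<inter> B) = prob B" using As Bs by (intro measure_eq_AE) auto
  have cB: "space M - B = (\<Union>y\<in>S. {\<omega>\<in>space M. \<xi> y \<omega> > c})" unfolding B_def by auto
  have "prob (space M - B) \<le> (\<Sum>y\<in>S. prob {\<omega>\<in>space M. \<xi> y \<omega> > c})"
    unfolding cB using S by (intro measure_UNION_le sg)
  also have "\<dots> = real (card S) * c powr (- \<alpha>)" using tail c by simp
  finally have "prob B \<ge> 1 - real (card S) * c powr (- \<alpha>)" using prob_compl[OF Bs] by simp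
  then show "measure M {\<omega>\<in>space M. (\<forall>y. \<xi> y \<omega> > 1) \<and> (\<forall>y\<in>S. \<xi> y \<omega> \<le> c)} \<ge> 1 - real (card S) * c powr (- \<alpha>)"
    unfolding G pAB .
qed

lemma box_card:
  fixes N :: nat
  shows "finite {u::int^'d. \<forall>i. \<bar>u$i\<bar> \<le> int N}" "card {u::int^'d. \<forall>i. \<bar>u$i\<bar> \<le> int N} \<le> (2*N+1)^CARD('d)"
proof -
  have sub: "{u::int^'d. \<forall>i. \<bar>u$i\<bar> \<le> int N} \<subseteq> vec_lambda ` (PiE UNIV (\<lambda>_. {-int N..int N}))"
  proof
    fix u :: "int^'d" assume "u \<in> {u::int^'d. \<forall>i. \<bar>u$i\<bar> \<le> int N}"
    then have "(\<lambda>i. u$i) \<in> PiE UNIV (\<lambda>_. {-int N..int N})" by (auto simp: abs_le_iff) (metis minus_le_iff)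
    then show "u \<in> vec_lambda ` (PiE UNIV (\<lambda>_. {-int N..int N}))" by (intro image_eqI[of _ _ "\<lambda>i. u$i"]) auto
  qed
  have fin: "finite (PiE (UNIV::'d set) (\<lambda>_. {-int N..int N}))" by (intro finite_PiE) auto
  show "finite {u::int^'d. \<forall>i. \<bar>u$i\<bar> \<le> int N}" using sub fin finite_subset by blast
  have "card {u::int^'d. \<forall>i. \<bar>u$i\<bar> \<le> int N} \<le> card (vec_lambda ` (PiE (UNIV::'d set) (\<lambda>_. {-int N..int N})))"
    using sub fin by (intro card_mono) auto
  also have "\<dots> \<le> card (PiE (UNIV::'d set) (\<lambda>_. {-int N..int N}))" using fin by (rule card_image_le)
  also have "\<dots> = (2*N+1)^CARD('d)" proof -
    have "nat (2 * int N + 1) = 2*N+1" by simp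
    then show ?thesis by (simp add: card_PiE)
  qed
  finally show "card {u::int^'d. \<forall>i. \<bar>u$i\<bar> \<le> int N} \<le> (2*N+1)^CARD('d)" .
qed



lemma LT_eq: "LT d \<alpha> T = Lr (rT d \<alpha> T)" unfolding LT_def Lr_def by simp

lemma hT_eq: "hT d \<alpha> T X = hh (qexp d \<alpha>) (xiT d \<alpha> T X) (Lr (rT d \<alpha> T))"
  unfolding hT_def hh_def LT_eq cst_sum by simp

lemma floorT_in: "floorT d \<alpha> T z \<in> Lr (rT d \<alpha> T)" if "rT d \<alpha> T > 0"
  unfolding floorT_def Lr_def using that by simp

lemma floorT_fix: "w \<in> Lr (rT d \<alpha> T) \<Longrightarrow> rT d \<alpha> T > 0 \<Longrightarrow> floorT d \<alpha> T w = w"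
  unfolding floorT_def vec_eq_iff using Lr_repr[of "rT d \<alpha> T" w] by simp

lemma floorT_dist:
  fixes z :: "real^'d"
  assumes r: "rT d \<alpha> T > 0"
  shows "l1norm (z - floorT d \<alpha> T z) \<le> real CARD('d) / rT d \<alpha> T"
proof -
  let ?r = "rT d \<alpha> T"
  have "\<bar>z$i - of_int \<lfloor>?r * z$i\<rfloor> / ?r\<bar> \<le> 1 / ?r" for i
  proof -
    have "of_int \<lfloor>?r * z$i\<rfloor> \<le> ?r * z$i" "?r * z$i < of_int \<lfloor>?r * z$i\<rfloor> + 1" by linarith+
    then have "of_int \<lfloor>?r * z$i\<rfloor> / ?r \<le> z$i" "z$i < (of_int \<lfloor>?r * z$i\<rfloor> + 1) / ?r" using r
      by (simp_all add: field_simps)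
    then show ?thesis using r by (simp add: add_divide_distrib)
  qed
  then have "l1norm (z - floorT d \<alpha> T z) \<le> (\<Sum>i\<in>(UNIV::'d set). 1 / ?r)"
    unfolding l1norm_def floorT_def by (intro sum_mono) simp
  then show ?thesis by simp
qed

lemma scaling:
  fixes X \<alpha> :: real and d :: nat
  assumes X: "X > 0" and a: "\<alpha> > real d"
  shows "(X powr (qexp d \<alpha> + 1)) ^ d * (X powr qexp d \<alpha>) powr (- \<alpha>) = 1"
proof -
  have e: "(qexp d \<alpha> + 1) * real d + qexp d \<alpha> * (- \<alpha>) = 0"
    unfolding qexp_def using a by (simp add: field_simps)
  have "(X powr (qexp d \<alpha> + 1)) ^ d = X powr ((qexp d \<alpha> + 1) * real d)"
    using X by (simp add: powr_realpow[symmetric] powr_powr)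
  moreover have "(X powr qexp d \<alpha>) powr (- \<alpha>) = X powr (qexp d \<alpha> * (- \<alpha>))" by (simp add: powr_powr)
  ultimately show ?thesis using e X by (simp add: powr_add[symmetric])
qed

lemma fixed_T:
  fixes M :: "'a measure" and \<xi> :: "int^'d \<Rightarrow> 'a \<Rightarrow> real" and \<alpha> :: real
    and t_inf \<delta> \<epsilon> :: real
  assumes P: "prob_space M"
    and meas: "\<forall>z. \<xi> z \<in> borel_measurable M"
    and tail: "\<forall>z x. x \<ge> 1 \<longrightarrow> measure M {\<omega> \<in> space M. \<xi> z \<omega> > x} = x powr (- \<alpha>)"
    and t_inf: "t_inf > 0" and \<delta>: "\<delta> > 0"
    and q: "qexp CARD('d) \<alpha> > 0" and K: "K \<ge> 1"
    and R: "R = K * (t_inf + 2) / qexp CARD('d) \<alpha>"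
    and eta: "\<eta> > 0" "\<eta> \<le> 1/2" "2*K*\<eta>/qexp CARD('d) \<alpha> \<le> \<delta>/4"
    and r: "rT CARD('d) \<alpha> T > 0" "rT CARD('d) \<alpha> T \<ge> 3 / R" "rT CARD('d) \<alpha> T \<ge> 4 * (real CARD('d) + 1) / \<delta>"
    and a: "aT CARD('d) \<alpha> T \<ge> 1"
    and bound: "(3 * R * rT CARD('d) \<alpha> T) ^ CARD('d) * (K * aT CARD('d) \<alpha> T) powr (- \<alpha>) \<le> \<epsilon>"
  shows "\<exists>E\<in>sets M. measure M E \<ge> 1 - \<epsilon> \<and>
           E \<subseteq> {\<omega> \<in> space M. \<forall>t\<in>{0..t_inf}.
              sT CARD('d) \<alpha> T (\<lambda>z. \<xi> z \<omega>) (t + \<eta>)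
                \<subseteq> (\<Union>y\<in>sT CARD('d) \<alpha> T (\<lambda>z. \<xi> z \<omega>) t. l1ball y \<delta>)}"
proof -
  define d where "d = CARD('d)"
  define q where "q = qexp d \<alpha>"
  define rr where "rr = rT d \<alpha> T"
  define aa where "aa = aT d \<alpha> T"
  have q0: "q > 0" using q unfolding q_def d_def .
  have R0: "R > 0" using R q0 K t_inf unfolding q_def d_def by simp
  have rr0: "rr > 0" using r unfolding rr_def d_def by simp
  have Rr: "R * rr \<ge> 3" using r(2) R0 unfolding rr_def d_def by (simp add: field_simps)
  define N where "N = nat \<lceil>R * rr\<rceil>"
  define S where "S = {u::int^'d. \<forall>i. \<bar>u$i\<bar> \<le> int N}"
  define c where "c = K * aa"
  have c1: "c \<ge> 1" unfolding c_def aa_def d_def using K a by (metis mult_mono' mult_1 order_trans zero_le_one)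
  define E where "E = {\<omega>\<in>space M. (\<forall>y. \<xi> y \<omega> > 1) \<and> (\<forall>y\<in>S. \<xi> y \<omega> \<le> c)}"
  have finS: "finite S" and cardS: "card S \<le> (2*N+1)^d" unfolding S_def d_def using box_card by auto
  have Es: "E \<in> sets M" and mE: "measure M E \<ge> 1 - real (card S) * c powr (- \<alpha>)"
    unfolding E_def using prob_part[OF P meas tail c1 finS] by auto
  have "real (2*N+1) \<le> 3 * R * rr"
  proof -
    have "real N \<le> R * rr + 1" unfolding N_def using Rr by linarith
    then show ?thesis using Rr by simp
  qed
  then have "real (card S) \<le> (3 * R * rr) ^ d"
    using cardS by (metis of_nat_le_iff of_nat_power power_mono of_nat_0_le_iff order_trans)
  then have "real (card S) * c powr (- \<alpha>) \<le> (3 * R * rr) ^ d * c powr (- \<alpha>)"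
    by (intro mult_right_mono) auto
  also have "\<dots> \<le> \<epsilon>" using bound unfolding c_def rr_def aa_def d_def .
  finally have mE': "measure M E \<ge> 1 - \<epsilon>" using mE by linarith
  have aa0: "aa > 0" using a unfolding aa_def d_def by simp
  have sub: "E \<subseteq> {\<omega> \<in> space M. \<forall>t\<in>{0..t_inf}.
              sT d \<alpha> T (\<lambda>z. \<xi> z \<omega>) (t + \<eta>)
                \<subseteq> (\<Union>y\<in>sT d \<alpha> T (\<lambda>z. \<xi> z \<omega>) t. l1ball y \<delta>)}"
  proof (rule subsetI)
    fix \<omega> assume \<omega>: "\<omega> \<in> E"
    then have om: "\<omega> \<in> space M" unfolding E_def by auto
    define X where "X = (\<lambda>z. \<xi> z \<omega>)"
    define f where "f = xiT d \<alpha> T X"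
    have X1: "\<forall>y. X y > 1" and XS: "\<forall>y\<in>S. X y \<le> c" using \<omega> unfolding E_def X_def by auto
    have X0: "X v > 0" for v using X1[rule_format, of v] by simp
    have fpos: "\<forall>y\<in>Lr rr. f y > 0" unfolding f_def xiT_def using aa0 unfolding aa_def
      by (auto intro!: divide_pos_pos X0)
    have fK: "\<forall>y\<in>Lr rr. l1norm y < R \<longrightarrow> f y \<le> K"
    proof (intro ballI impI)
      fix y :: "real^'d" assume yL: "y \<in> Lr rr" and yR: "l1norm y < R"
      define u :: "int^'d" where "u = (\<chi> i. \<lfloor>rr * y$i\<rfloor>)"
      have "u \<in> S" unfolding S_def
      proof (intro CollectI allI)
        fix i
        have ye: "y $ i = of_int (u$i) / rr" unfolding u_def vec_lambda_beta by (rule Lr_repr[OF rr0 yL])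
        have "\<bar>y $ i\<bar> \<le> l1norm y" unfolding l1norm_def
          using member_le_sum[of i UNIV "\<lambda>i. \<bar>y$i\<bar>"] by simp
        then have "\<bar>y $ i\<bar> * rr \<le> R * rr" using yR rr0 by (intro mult_right_mono) auto
        moreover have "\<bar>y $ i\<bar> * rr = of_int \<bar>u$i\<bar>" unfolding ye using rr0 by (simp add: abs_divide)
        ultimately have "of_int \<bar>u$i\<bar> \<le> R * rr" by linarith
        then have "of_int \<bar>u$i\<bar> \<le> (of_int \<lceil>R * rr\<rceil> :: real)" using le_of_int_ceiling[of "R*rr"] by linarith
        then have "\<bar>u$i\<bar> \<le> \<lceil>R * rr\<rceil>" by (simp only: of_int_le_iff)
        moreover have "\<lceil>R * rr\<rceil> \<ge> 0" using Rr by simp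
        ultimately show "\<bar>u$i\<bar> \<le> int N" unfolding N_def by simp
      qed
      then have "X u \<le> K * aa" using XS unfolding c_def by auto
      moreover have "f y = X u / aa" unfolding f_def xiT_def u_def aa_def rr_def by simp
      ultimately show "f y \<le> K" using aa0 by (simp add: pos_divide_le_eq)
    qed
    have "\<forall>t\<in>{0..t_inf}. sT d \<alpha> T (\<lambda>z. \<xi> z \<omega>) (t + \<eta>) \<subseteq> (\<Union>y\<in>sT d \<alpha> T (\<lambda>z. \<xi> z \<omega>) t. l1ball y \<delta>)"
    proof
    fix t :: real assume t: "t \<in> {0..t_inf}"
    show "sT d \<alpha> T (\<lambda>z. \<xi> z \<omega>) (t + \<eta>) \<subseteq> (\<Union>y\<in>sT d \<alpha> T (\<lambda>z. \<xi> z \<omega>) t. l1ball y \<delta>)"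
    proof
      fix z assume "z \<in> sT d \<alpha> T (\<lambda>z. \<xi> z \<omega>) (t + \<eta>)"
      then have hz: "hh q f (Lr rr) (floorT d \<alpha> T z) \<le> t + \<eta>"
        unfolding sT_def hT_eq f_def q_def rr_def X_def by simp
      have big: "t + 2*\<eta> < q*R/K" using R t eta K q0 unfolding q_def d_def by simp
      obtain w where wL: "w \<in> Lr rr" and w1: "l1norm (floorT d \<alpha> T z - w) \<le> 2*K*\<eta>/q + 1/rr"
        and w2: "hh q f (Lr rr) w \<le> t"
        using det_main[OF q0 _ rr0 R0 fpos fK big _ eta(1) floorT_in[of d \<alpha> T z, folded rr_def, OF rr0] hz] K t by auto
      have "w \<in> sT d \<alpha> T (\<lambda>z. \<xi> z \<omega>) t"
        unfolding sT_def using floorT_fix[of w d \<alpha> T] wL rr0 w2 unfolding hT_eq f_def q_def rr_def X_def by simp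
      moreover have "z \<in> l1ball w \<delta>"
      proof -
        have "l1norm (z - w) \<le> l1norm (z - floorT d \<alpha> T z) + l1norm (floorT d \<alpha> T z - w)" by (rule l1norm_tri)
        also have "\<dots> \<le> real d / rr + (\<delta>/4 + 1/rr)"
          using floorT_dist[of d \<alpha> T z] rr0 w1 eta(3) unfolding rr_def d_def q_def by simp
        also have "\<dots> = (real d + 1) / rr + \<delta>/4" by (simp add: add_divide_distrib)
        also have "(real d + 1) / rr \<le> \<delta>/4" using r(3) rr0 \<delta> unfolding rr_def d_def by (simp add: field_simps)
        finally show ?thesis unfolding l1ball_def using \<delta> by simp
      qed
      ultimately show "z \<in> (\<Union>y\<in>sT d \<alpha> T (\<lambda>z. \<xi> z \<omega>) t. l1ball y \<delta>)" by blast
    qed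
    qed
    then show "\<omega> \<in> {\<omega> \<in> space M. \<forall>t\<in>{0..t_inf}.
              sT d \<alpha> T (\<lambda>z. \<xi> z \<omega>) (t + \<eta>)
                \<subseteq> (\<Union>y\<in>sT d \<alpha> T (\<lambda>z. \<xi> z \<omega>) t. l1ball y \<delta>)}" using om by simp
  qed
  show ?thesis using Es mE' sub unfolding d_def by blast
qed



lemma powr_bound:
  fixes B K \<epsilon> \<alpha> dd :: real
  assumes B: "B > 0" and e: "\<epsilon> > 0" and ad: "\<alpha> > dd" and K: "K \<ge> (B/\<epsilon>) powr (1/(\<alpha> - dd))" "K > 0"
  shows "B * K powr (dd - \<alpha>) \<le> \<epsilon>"
proof -
  have "((B/\<epsilon>) powr (1/(\<alpha> - dd))) powr (\<alpha> - dd) \<le> K powr (\<alpha> - dd)"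
    using K ad B e by (intro powr_mono2) auto
  moreover have "((B/\<epsilon>) powr (1/(\<alpha> - dd))) powr (\<alpha> - dd) = B/\<epsilon>"
    using ad B e by (simp add: powr_powr)
  ultimately have Kb: "B/\<epsilon> \<le> K powr (\<alpha> - dd)" by simp
  have Kp: "K powr (\<alpha> - dd) > 0" using K by simp
  have "K powr (dd - \<alpha>) = 1 / K powr (\<alpha> - dd)" using K by (simp add: powr_minus_divide[symmetric] powr_minus)
  then have "B * K powr (dd - \<alpha>) = B / K powr (\<alpha> - dd)" by simp
  also have "\<dots> \<le> B / (B/\<epsilon>)" using Kb B e Kp by (intro divide_left_mono) auto
  also have "\<dots> = \<epsilon>" using B by simp
  finally show ?thesis .
qed

lemma tl_lim: "filterlim (\<lambda>T::real. T / ln T) at_top at_top"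
  by real_asymp

theorem lemma6p1:
  fixes M :: "'a measure" and \<xi> :: "int^'d \<Rightarrow> 'a \<Rightarrow> real" and \<alpha> :: real
    and t_inf \<delta> \<epsilon> :: real
  assumes "prob_space M"
    and "\<alpha> > real CARD('d)"
    and "\<forall>z. \<xi> z \<in> borel_measurable M"
    and "prob_space.indep_vars M (\<lambda>_. borel) \<xi> UNIV"
    and "\<forall>z x. x \<ge> 1 \<longrightarrow> measure M {\<omega> \<in> space M. \<xi> z \<omega> > x} = x powr (- \<alpha>)"
    and "t_inf > 0" and "\<delta> > 0" and "\<epsilon> > 0"
  shows "\<exists>\<eta>>0. eventually (\<lambda>T. \<exists>E\<in>sets M. measure M E \<ge> 1 - \<epsilon> \<and>
           E \<subseteq> {\<omega> \<in> space M. \<forall>t\<in>{0..t_inf}.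
              sT CARD('d) \<alpha> T (\<lambda>z. \<xi> z \<omega>) (t + \<eta>)
                \<subseteq> (\<Union>y\<in>sT CARD('d) \<alpha> T (\<lambda>z. \<xi> z \<omega>) t. l1ball y \<delta>)}) at_top"
proof -
  note P = assms(1) and ad = assms(2) and meas = assms(3) and tail = assms(5)
    and ti = assms(6) and de = assms(7) and ep = assms(8)
  define d where "d = CARD('d)"
  define q where "q = qexp d \<alpha>"
  have d1: "real d \<ge> 1" unfolding d_def by (simp add: Suc_leI)
  have q0: "q > 0" unfolding q_def qexp_def d_def using ad d1 unfolding d_def by simp
  define C where "C = t_inf + 2"
  define B where "B = (3*C/q)^d"
  have B0: "B > 0" unfolding B_def C_def using q0 ti by simp
  define K where "K = max 1 ((B/\<epsilon>) powr (1/(\<alpha> - real d)))"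
  have K1: "K \<ge> 1" unfolding K_def by simp
  define R where "R = K * C / q"
  have R0: "R > 0" unfolding R_def C_def using K1 q0 ti by simp
  define \<eta> where "\<eta> = min (1/2) (\<delta>*q/(8*K))"
  have eta: "\<eta> > 0" "\<eta> \<le> 1/2" "2*K*\<eta>/q \<le> \<delta>/4"
  proof -
    show "\<eta> > 0" unfolding \<eta>_def using de q0 K1 by simp
    show "\<eta> \<le> 1/2" unfolding \<eta>_def by simp
    have "2*K*\<eta>/q \<le> 2*K*(\<delta>*q/(8*K))/q" unfolding \<eta>_def using K1 q0 by (intro divide_right_mono mult_left_mono) auto
    also have "\<dots> = \<delta>/4" using K1 q0 by (simp add: field_simps)
    finally show "2*K*\<eta>/q \<le> \<delta>/4" .
  qed
  define \<Lambda> where "\<Lambda> = max 1 (max (3/R) (4*(real d+1)/\<delta>))"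
  have ev: "eventually (\<lambda>T. T > 1 \<and> T / ln T \<ge> \<Lambda>) at_top"
    using tl_lim[unfolded filterlim_at_top] eventually_gt_at_top[of 1] by (auto intro: eventually_conj)
  have bound_KB: "B * K powr (real d - \<alpha>) \<le> \<epsilon>"
    using powr_bound[OF B0 ep, of "real d" \<alpha> K] ad K1 unfolding K_def d_def by auto
  show ?thesis
  proof (intro exI[of _ \<eta>] conjI eta(1), rule eventually_mono[OF ev], elim conjE)
    fix T :: real assume T1: "T > 1" and TL: "T / ln T \<ge> \<Lambda>"
    define X where "X = T / ln T"
    have X1: "X \<ge> 1" using TL unfolding X_def \<Lambda>_def by simp
    have rX: "rT d \<alpha> T = X powr (q + 1)" unfolding rT_def X_def q_def ..
    have aX: "aT d \<alpha> T = X powr q" unfolding aT_def X_def q_def ..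
    have "X powr 1 \<le> X powr (q + 1)" using X1 q0 by (intro powr_mono) auto
    then have rge: "rT d \<alpha> T \<ge> X" using X1 rX by simp
    have r0: "rT d \<alpha> T > 0" using rge X1 by simp
    have r2: "rT d \<alpha> T \<ge> 3 / R" using rge TL unfolding X_def \<Lambda>_def by simp
    have r3: "rT d \<alpha> T \<ge> 4 * (real d + 1) / \<delta>" using rge TL unfolding X_def \<Lambda>_def by simp
    have a1: "aT d \<alpha> T \<ge> 1" using X1 q0 aX by (simp add: ge_one_powr_ge_zero)
    have bnd: "(3 * R * rT d \<alpha> T) ^ d * (K * aT d \<alpha> T) powr (- \<alpha>) \<le> \<epsilon>"
    proof -
      have "(3 * R * rT d \<alpha> T) ^ d * (K * aT d \<alpha> T) powr (- \<alpha>)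
          = ((3*C/q)^d * K^d * K powr (-\<alpha>)) * ((rT d \<alpha> T)^d * (aT d \<alpha> T) powr (-\<alpha>))"
        using K1 a1 unfolding R_def by (simp add: powr_mult power_mult_distrib field_simps)
      also have "(rT d \<alpha> T)^d * (aT d \<alpha> T) powr (-\<alpha>) = 1"
        unfolding rX aX q_def using scaling[where X=X and \<alpha>=\<alpha> and d=d] X1 ad unfolding d_def by simp
      finally have e1: "(3 * R * rT d \<alpha> T) ^ d * (K * aT d \<alpha> T) powr (- \<alpha>) = (3*C/q)^d * (K^d * K powr (-\<alpha>))"
        by (simp add: mult.assoc)
      have "K^d * K powr (-\<alpha>) = K powr (real d - \<alpha>)"
        using K1 by (simp add: powr_realpow[symmetric] powr_add[symmetric])
      then show ?thesis using bound_KB e1 unfolding B_def by simp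
    qed
    show "\<exists>E\<in>sets M. measure M E \<ge> 1 - \<epsilon> \<and>
           E \<subseteq> {\<omega> \<in> space M. \<forall>t\<in>{0..t_inf}.
              sT CARD('d) \<alpha> T (\<lambda>z. \<xi> z \<omega>) (t + \<eta>)
                \<subseteq> (\<Union>y\<in>sT CARD('d) \<alpha> T (\<lambda>z. \<xi> z \<omega>) t. l1ball y \<delta>)}"
      using fixed_T[OF P meas tail ti de, of K R \<eta> T \<epsilon>] q0 K1 eta r0 r2 r3 a1 bnd
      unfolding R_def C_def q_def d_def by auto
  qed
qed


end
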